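(* For every prime power $k$, the graph $G_k$ has girth at least $6$.
   Context: A Latin square of order $k$ is a partition $L = L(1) \cup \dots \cup L(k)$ of $A = [k]\times[k]$ such that each row $A[i,\cdot] = \{(i,j) : j \in [k]\}$ and each column $\{(j,i): j\in[k]\}$ meets each part $L(n)$ in exactly one position. Two Latin squares $L_1, L_2$ of order $k$ are orthogonal if $|L_1(n_1)\cap L_2(n_2)| = 1$ for all $n_1, n_2 \in [k]$. For a prime power $k$, fix $k-1$ mutually orthogonal Latin squares $L_1,\dots,L_{k-1}$ of order $k$. Let $R = \{A[i,\cdot] : i \in [k]\}$ (the rows) and $\mathcal{L} = \{L_s(n) : s \in [k-1], n \in [k]\}$. The graph $G_k$ has vertex set $A \cup R \cup \mathcal{L}$ (disjoint union, $2k^2$ vertices) and an edge between $p \in A$ and $S \in R \cup \mathcal{L}$ whenever $p \in S$; no other edges. The girth is the length of a shortest cycle. *)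

theory Defs
  imports "HOL-Number_Theory.Prime_Powers"
begin

type_synonym pos = "nat \<times> nat"

definition grid :: "nat \<Rightarrow> pos set" where
  "grid k = {1..k} \<times> {1..k}"

definition row :: "nat \<Rightarrow> nat \<Rightarrow> pos set" where
  "row k i = {(i, j) | j. j \<in> {1..k}}"

definition col :: "nat \<Rightarrow> nat \<Rightarrow> pos set" where
  "col k i = {(j, i) | j. j \<in> {1..k}}"

definition latin_square :: "nat \<Rightarrow> (nat \<Rightarrow> pos set) \<Rightarrow> bool" where
  "latin_square k L \<longleftrightarrow>
     (\<Union>n\<in>{1..k}. L n) = grid k \<and>
     (\<forall>n\<in>{1..k}. \<forall>m\<in>{1..k}. n \<noteq> m \<longrightarrow> L n \<inter> L m = {}) \<and>
     (\<forall>i\<in>{1..k}. \<forall>n\<in>{1..k}. card (row k i \<inter> L n) = 1 \<and> card (col k i \<inter> L n) = 1)"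

definition orthogonal :: "nat \<Rightarrow> (nat \<Rightarrow> pos set) \<Rightarrow> (nat \<Rightarrow> pos set) \<Rightarrow> bool" where
  "orthogonal k L1 L2 \<longleftrightarrow> (\<forall>n1\<in>{1..k}. \<forall>n2\<in>{1..k}. card (L1 n1 \<inter> L2 n2) = 1)"

definition MOLS :: "nat \<Rightarrow> (nat \<Rightarrow> nat \<Rightarrow> pos set) \<Rightarrow> bool" where
  "MOLS k Ls \<longleftrightarrow> (\<forall>s\<in>{1..k-1}. latin_square k (Ls s)) \<and>
     (\<forall>s\<in>{1..k-1}. \<forall>t\<in>{1..k-1}. s \<noteq> t \<longrightarrow> orthogonal k (Ls s) (Ls t))"

text \<open>Vertices: Inl p for points p of A, Inr S for blocks S in R \<union> \<L> (disjoint union).\<close>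
definition Gk_vertices :: "nat \<Rightarrow> (nat \<Rightarrow> nat \<Rightarrow> pos set) \<Rightarrow> (pos + pos set) set" where
  "Gk_vertices k Ls = Inl ` grid k \<union>
     Inr ` ({row k i | i. i \<in> {1..k}} \<union> {Ls s n | s n. s \<in> {1..k-1} \<and> n \<in> {1..k}})"

definition Gk_adj :: "nat \<Rightarrow> (nat \<Rightarrow> nat \<Rightarrow> pos set) \<Rightarrow> (pos + pos set) \<Rightarrow> (pos + pos set) \<Rightarrow> bool" where
  "Gk_adj k Ls u v \<longleftrightarrow> u \<in> Gk_vertices k Ls \<and> v \<in> Gk_vertices k Ls \<and>
     (\<exists>p S. ((u = Inl p \<and> v = Inr S) \<or> (u = Inr S \<and> v = Inl p)) \<and> p \<in> S)"

definition is_cycle :: "'v set \<Rightarrow> ('v \<Rightarrow> 'v \<Rightarrow> bool) \<Rightarrow> 'v list \<Rightarrow> bool" where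
  "is_cycle V E c \<longleftrightarrow> length c \<ge> 3 \<and> distinct c \<and> set c \<subseteq> V \<and>
     (\<forall>i<length c. E (c ! i) (c ! ((i + 1) mod length c)))"

text \<open>girth \<ge> g: every cycle has length \<ge> g (vacuous for acyclic graphs, girth = \<infinity>).\<close>
definition girth_ge :: "'v set \<Rightarrow> ('v \<Rightarrow> 'v \<Rightarrow> bool) \<Rightarrow> nat \<Rightarrow> bool" where
  "girth_ge V E g \<longleftrightarrow> (\<forall>c. is_cycle V E c \<longrightarrow> length c \<ge> g)"

end

theory Submission
  imports Defs
begin

lemma card1_eq: "card A = 1 \<Longrightarrow> x \<in> A \<Longrightarrow> y \<in> A \<Longrightarrow> x = y"
  by (metis card_1_singletonE singletonD)

lemma blocks_meet:
  assumes M: "MOLS k Ls"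
    and S: "S \<in> {row k i | i. i \<in> {1..k}} \<union> {Ls s n | s n. s \<in> {1..k-1} \<and> n \<in> {1..k}}"
    and T: "T \<in> {row k i | i. i \<in> {1..k}} \<union> {Ls s n | s n. s \<in> {1..k-1} \<and> n \<in> {1..k}}"
    and ne: "S \<noteq> T" and x: "x \<in> S" "x \<in> T" and y: "y \<in> S" "y \<in> T"
  shows "x = y"
proof -
  have LS: "\<And>s. s \<in> {1..k-1} \<Longrightarrow> latin_square k (Ls s)" using M by (simp add: MOLS_def)
  have OR: "\<And>s t. s \<in> {1..k-1} \<Longrightarrow> t \<in> {1..k-1} \<Longrightarrow> s \<noteq> t \<Longrightarrow> orthogonal k (Ls s) (Ls t)"
    using M by (simp add: MOLS_def)
  from S show ?thesis
  proof (elim UnE CollectE exE conjE)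
    fix i assume Si: "S = row k i" "i \<in> {1..k}"
    from T show ?thesis
    proof (elim UnE CollectE exE conjE)
      fix j assume Tj: "T = row k j" "j \<in> {1..k}"
      then have "i \<noteq> j" using Si ne by auto
      then show ?thesis using x Si Tj by (auto simp: row_def)
    next
      fix t m assume Tj: "T = Ls t m" "t \<in> {1..k-1}" "m \<in> {1..k}"
      have "card (row k i \<inter> Ls t m) = 1" using LS[OF Tj(2)] Si Tj by (simp add: latin_square_def)
      then show ?thesis using card1_eq x y Si Tj by (metis IntI)
    qed
  next
    fix s n assume Si: "S = Ls s n" "s \<in> {1..k-1}" "n \<in> {1..k}"
    from T show ?thesis
    proof (elim UnE CollectE exE conjE)
      fix j assume Tj: "T = row k j" "j \<in> {1..k}"
      have "card (row k j \<inter> Ls s n) = 1" using LS[OF Si(2)] Si Tj by (simp add: latin_square_def)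
      then show ?thesis using card1_eq x y Si Tj by (metis IntI)
    next
      fix t m assume Tj: "T = Ls t m" "t \<in> {1..k-1}" "m \<in> {1..k}"
      show ?thesis
      proof (cases "s = t")
        case True
        then have "n \<noteq> m" using Si Tj ne by auto
        then have "Ls s n \<inter> Ls s m = {}" using LS[OF Si(2)] Si Tj by (simp add: latin_square_def)
        then show ?thesis using x Si Tj True by auto
      next
        case False
        have "card (Ls s n \<inter> Ls t m) = 1" using OR[OF Si(2) Tj(2) False] Si Tj
          by (simp add: orthogonal_def)
        then show ?thesis using card1_eq x y Si Tj by (metis IntI)
      qed
    qed
  qed
qed

lemma adj_isl: "Gk_adj k Ls u v \<Longrightarrow> isl u \<noteq> isl v"
  by (auto simp: Gk_adj_def)

lemma adj_LR: "Gk_adj k Ls (Inl p) (Inr S) \<Longrightarrow> p \<in> S \<and> Inr S \<in> Gk_vertices k Ls"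
  by (auto simp: Gk_adj_def)

lemma adj_RL: "Gk_adj k Ls (Inr S) (Inl p) \<Longrightarrow> p \<in> S \<and> Inr S \<in> Gk_vertices k Ls"
  by (auto simp: Gk_adj_def)

lemma no4:
  assumes M: "MOLS k Ls" and a: "Gk_adj k Ls (Inl p) (Inr S)" "Gk_adj k Ls (Inr S) (Inl q)"
   "Gk_adj k Ls (Inl q) (Inr T)" "Gk_adj k Ls (Inr T) (Inl p)" and ne: "p \<noteq> q" "S \<noteq> T"
  shows False
proof -
  have "S \<in> {row k i | i. i \<in> {1..k}} \<union> {Ls s n | s n. s \<in> {1..k-1} \<and> n \<in> {1..k}}"
    using adj_LR[OF a(1)] by (auto simp: Gk_vertices_def)
  moreover have "T \<in> {row k i | i. i \<in> {1..k}} \<union> {Ls s n | s n. s \<in> {1..k-1} \<and> n \<in> {1..k}}"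
    using adj_LR[OF a(3)] by (auto simp: Gk_vertices_def)
  ultimately have "p = q" using blocks_meet[OF M _ _ ne(2)] adj_LR[OF a(1)] adj_RL[OF a(2)]
      adj_LR[OF a(3)] adj_RL[OF a(4)] by blast
  then show False using ne by simp
qed

theorem lemma2:
  fixes k :: nat and Ls :: "nat \<Rightarrow> nat \<Rightarrow> pos set"
  assumes "primepow k"
    and "MOLS k Ls"
  shows "girth_ge (Gk_vertices k Ls) (Gk_adj k Ls) 6"
  unfolding girth_ge_def
proof (intro allI impI, rule ccontr)
  fix c assume cy: "is_cycle (Gk_vertices k Ls) (Gk_adj k Ls) c" and lt: "\<not> 6 \<le> length c"
  have E: "\<And>i. i < length c \<Longrightarrow> Gk_adj k Ls (c ! i) (c ! ((i + 1) mod length c))"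
    and d: "distinct c" and l3: "length c \<ge> 3" using cy by (auto simp: is_cycle_def)
  have E1: "\<And>i. Suc i < length c \<Longrightarrow> Gk_adj k Ls (c ! i) (c ! Suc i)"
    using E by (metis Suc_eq_plus1 Suc_lessD mod_less)
  have E2: "Gk_adj k Ls (c ! (length c - 1)) (c ! 0)"
  proof -
    have "length c - 1 + 1 = length c" using l3 by simp
    then have "(length c - 1 + 1) mod length c = 0" by simp
    then show ?thesis using E[of "length c - 1"] l3 by simp
  qed
  have "length c = 3 \<or> length c = 4 \<or> length c = 5" using lt l3 by linarith
  moreover
  { assume L: "length c = 3"
    have "Gk_adj k Ls (c!0) (c!1)" "Gk_adj k Ls (c!1) (c!2)" "Gk_adj k Ls (c!2) (c!0)"
      using E1[of 0] E1[of 1] E1[of 2] E1[of 3] E2 L by (simp_all add: numeral_eq_Suc)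
    then have "isl (c!0) \<noteq> isl (c!1)" "isl (c!1) \<noteq> isl (c!2)" "isl (c!2) \<noteq> isl (c!0)"
      using adj_isl by blast+
    then have False by blast }
  moreover
  { assume L: "length c = 5"
    have "Gk_adj k Ls (c!0) (c!1)" "Gk_adj k Ls (c!1) (c!2)" "Gk_adj k Ls (c!2) (c!3)"
      "Gk_adj k Ls (c!3) (c!4)" "Gk_adj k Ls (c!4) (c!0)"
      using E1[of 0] E1[of 1] E1[of 2] E1[of 3] E2 L by (simp_all add: numeral_eq_Suc)
    then have "isl (c!0) \<noteq> isl (c!1)" "isl (c!1) \<noteq> isl (c!2)" "isl (c!2) \<noteq> isl (c!3)"
      "isl (c!3) \<noteq> isl (c!4)" "isl (c!4) \<noteq> isl (c!0)"
      using adj_isl by blast+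
    then have False by blast }
  moreover
  { assume L: "length c = 4"
    have e: "Gk_adj k Ls (c!0) (c!1)" "Gk_adj k Ls (c!1) (c!2)" "Gk_adj k Ls (c!2) (c!3)"
      "Gk_adj k Ls (c!3) (c!0)"
      using E1[of 0] E1[of 1] E1[of 2] E1[of 3] E2 L by (simp_all add: numeral_eq_Suc)
    have dd: "c!0 \<noteq> c!2" "c!1 \<noteq> c!3" using d L by (auto simp: nth_eq_iff_index_eq)
    have False
    proof (cases "c!0")
      case (Inl p)
      then obtain S where S: "c!1 = Inr S" using adj_isl[OF e(1)] by (cases "c!1") auto
      then obtain q where q: "c!2 = Inl q" using adj_isl[OF e(2)] by (cases "c!2") auto
      then obtain T where T: "c!3 = Inr T" using adj_isl[OF e(3)] by (cases "c!3") auto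
      show False using no4[OF assms(2), of p S q T] e dd Inl S q T by auto
    next
      case (Inr S)
      then obtain p where p: "c!1 = Inl p" using adj_isl[OF e(1)] by (cases "c!1") auto
      then obtain T where T: "c!2 = Inr T" using adj_isl[OF e(2)] by (cases "c!2") auto
      then obtain q where q: "c!3 = Inl q" using adj_isl[OF e(3)] by (cases "c!3") auto
      show False using no4[OF assms(2), of p T q S] e dd Inr p q T by auto
    qed }
  ultimately show False by blast
qed

end
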